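(* Let $G$ be a Borel groupoid which is the increasing union of a sequence $(G_n)$ of proper Borel subgroupoids. Then $G$ is Borel amenable.
   Context: All Borel spaces are analytic. For a Borel groupoid $H$ with $H$ acting on itself by left multiplication and on $H^{(0)}$ by $\gamma\cdot s(\gamma)=r(\gamma)$: $H$ is proper if there is a Borel system $\{m^u\}_{u\in H^{(0)}}$ of probability measures, $m^u$ supported on $H^u=r^{-1}(u)$, $u\mapsto\int f\,dm^u$ Borel for nonnegative Borel $f$, with $\gamma\cdot m^{s(\gamma)}=m^{r(\gamma)}$. $G$ is Borel amenable if there is a sequence of such Borel systems $m_n$ of probability measures on $G$ with $\|\gamma\cdot m_n^{s(\gamma)}-m_n^{r(\gamma)}\|_1\to0$ for every $\gamma\in G$ (total variation norm). *)

theory Defs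
  imports "HOL-Probability.Probability"
begin

text \<open>Analytic Borel space: Borel isomorphic to an analytic subset of the reals
  (i.e. empty or a continuous image of the Baire space nat => nat).  Every Polish
  space Borel-embeds into the reals, so this is the usual notion.\<close>
definition analytic_space :: "'a measure \<Rightarrow> bool" where
  "analytic_space M \<longleftrightarrow>
     (\<exists>(A::real set) g.
        (A = {} \<or> (\<exists>h :: (nat \<Rightarrow> nat) \<Rightarrow> real. continuous_on UNIV h \<and> A = range h)) \<and>
        bij_betw g (space M) A \<and>
        g \<in> measurable M (restrict_space borel A) \<and>
        inv_into (space M) g \<in> measurable (restrict_space borel A) M)"

text \<open>A Borel groupoid: the underlying Borel space is M (so G = space M),
  U is the unit space G^(0), r s are range and source, mul the partial
  multiplication (meaningful on composable pairs) and iv the inverse.\<close>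
definition composable_pairs :: "'a measure \<Rightarrow> ('a \<Rightarrow> 'a) \<Rightarrow> ('a \<Rightarrow> 'a) \<Rightarrow> ('a \<times> 'a) set" where
  "composable_pairs M r s = {(g, h). g \<in> space M \<and> h \<in> space M \<and> s g = r h}"

definition groupoid :: "'a set \<Rightarrow> 'a set \<Rightarrow> ('a \<Rightarrow> 'a) \<Rightarrow> ('a \<Rightarrow> 'a)
    \<Rightarrow> ('a \<Rightarrow> 'a \<Rightarrow> 'a) \<Rightarrow> ('a \<Rightarrow> 'a) \<Rightarrow> bool" where
  "groupoid G U r s mul iv \<longleftrightarrow>
     U \<subseteq> G \<and>
     (\<forall>g\<in>G. r g \<in> U \<and> s g \<in> U) \<and>
     (\<forall>u\<in>U. r u = u \<and> s u = u) \<and>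
     (\<forall>g\<in>G. \<forall>h\<in>G. s g = r h \<longrightarrow>
        mul g h \<in> G \<and> r (mul g h) = r g \<and> s (mul g h) = s h) \<and>
     (\<forall>g\<in>G. \<forall>h\<in>G. \<forall>k\<in>G. s g = r h \<longrightarrow> s h = r k \<longrightarrow>
        mul (mul g h) k = mul g (mul h k)) \<and>
     (\<forall>g\<in>G. mul (r g) g = g \<and> mul g (s g) = g) \<and>
     (\<forall>g\<in>G. iv g \<in> G \<and> r (iv g) = s g \<and> s (iv g) = r g \<and>
        mul g (iv g) = r g \<and> mul (iv g) g = s g)"

definition borel_groupoid :: "'a measure \<Rightarrow> 'a set \<Rightarrow> ('a \<Rightarrow> 'a) \<Rightarrow> ('a \<Rightarrow> 'a)
    \<Rightarrow> ('a \<Rightarrow> 'a \<Rightarrow> 'a) \<Rightarrow> ('a \<Rightarrow> 'a) \<Rightarrow> bool" where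
  "borel_groupoid M U r s mul iv \<longleftrightarrow>
     groupoid (space M) U r s mul iv \<and>
     U \<in> sets M \<and>
     r \<in> measurable M M \<and> s \<in> measurable M M \<and> iv \<in> measurable M M \<and>
     composable_pairs M r s \<in> sets (M \<Otimes>\<^sub>M M) \<and>
     (\<lambda>(g, h). mul g h) \<in> measurable (restrict_space (M \<Otimes>\<^sub>M M) (composable_pairs M r s)) M"

definition borel_subgroupoid :: "'a measure \<Rightarrow> ('a \<Rightarrow> 'a) \<Rightarrow> ('a \<Rightarrow> 'a)
    \<Rightarrow> ('a \<Rightarrow> 'a \<Rightarrow> 'a) \<Rightarrow> ('a \<Rightarrow> 'a) \<Rightarrow> 'a set \<Rightarrow> bool" where
  "borel_subgroupoid M r s mul iv H \<longleftrightarrow>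
     H \<in> sets M \<and>
     (\<forall>g\<in>H. \<forall>h\<in>H. s g = r h \<longrightarrow> mul g h \<in> H) \<and>
     (\<forall>g\<in>H. iv g \<in> H)"

text \<open>Left translate of a measure: (gamma . m)(A) = m({h in H^(s gamma). gamma h in A}).\<close>
definition left_preimage :: "('a \<Rightarrow> 'a) \<Rightarrow> ('a \<Rightarrow> 'a \<Rightarrow> 'a) \<Rightarrow> 'a set \<Rightarrow> 'a \<Rightarrow> 'a \<Rightarrow> 'a set \<Rightarrow> 'a set" where
  "left_preimage r mul H u \<gamma> A = {h \<in> H. r h = u \<and> mul \<gamma> h \<in> A}"

definition borel_prob_system :: "'a measure \<Rightarrow> ('a \<Rightarrow> 'a) \<Rightarrow> 'a set \<Rightarrow> 'a set
    \<Rightarrow> ('a \<Rightarrow> 'a measure) \<Rightarrow> bool" where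
  "borel_prob_system M r H H0 m \<longleftrightarrow>
     (\<forall>u\<in>H0. prob_space (m u) \<and> sets (m u) = sets (restrict_space M H) \<and>
        emeasure (m u) {h \<in> H. r h \<noteq> u} = 0) \<and>
     (\<forall>f \<in> borel_measurable (restrict_space M H).
        (\<lambda>u. \<integral>\<^sup>+ x. f x \<partial>(m u)) \<in> borel_measurable (restrict_space M H0))"

definition proper_subgroupoid :: "'a measure \<Rightarrow> 'a set \<Rightarrow> ('a \<Rightarrow> 'a) \<Rightarrow> ('a \<Rightarrow> 'a)
    \<Rightarrow> ('a \<Rightarrow> 'a \<Rightarrow> 'a) \<Rightarrow> 'a set \<Rightarrow> bool" where
  "proper_subgroupoid M U r s mul H \<longleftrightarrow>
     (\<exists>m. borel_prob_system M r H (H \<inter> U) m \<and>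
        (\<forall>\<gamma>\<in>H. \<forall>A \<in> sets (restrict_space M H).
           emeasure (m (s \<gamma>)) (left_preimage r mul H (s \<gamma>) \<gamma> A) = emeasure (m (r \<gamma>)) A))"

definition tv_norm :: "'a measure \<Rightarrow> ('a set \<Rightarrow> real) \<Rightarrow> ('a set \<Rightarrow> real) \<Rightarrow> ennreal" where
  "tv_norm M \<mu> \<nu> =
     (SUP P \<in> {P. finite P \<and> P \<subseteq> sets M \<and> disjoint P \<and> \<Union>P = space M}.
        \<Sum>A\<in>P. ennreal \<bar>\<mu> A - \<nu> A\<bar>)"

definition borel_amenable :: "'a measure \<Rightarrow> 'a set \<Rightarrow> ('a \<Rightarrow> 'a) \<Rightarrow> ('a \<Rightarrow> 'a)
    \<Rightarrow> ('a \<Rightarrow> 'a \<Rightarrow> 'a) \<Rightarrow> bool" where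
  "borel_amenable M U r s mul \<longleftrightarrow>
     (\<exists>m :: nat \<Rightarrow> 'a \<Rightarrow> 'a measure.
        (\<forall>n. borel_prob_system M r (space M) U (m n)) \<and>
        (\<forall>\<gamma>\<in>space M.
           (\<lambda>n. tv_norm M
                  (\<lambda>A. measure (m n (s \<gamma>)) (left_preimage r mul (space M) (s \<gamma>) \<gamma> A))
                  (\<lambda>A. measure (m n (r \<gamma>)) A)) \<longlonglongrightarrow> 0))"

end

theory Submission
  imports Defs
begin

lemma analytic_singleton:
  assumes "analytic_space M" "u \<in> space M"
  shows "{u} \<in> sets M"
proof -
  from assms(1) obtain A :: "real set" and g where
    bij: "bij_betw g (space M) A" and gm: "g \<in> measurable M (restrict_space borel A)"
    unfolding analytic_space_def by (elim exE conjE)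
  have cl: "{g u} \<in> sets borel" by simp
  have "A \<inter> {g u} \<in> sets (restrict_space borel A)"
    unfolding sets_restrict_space by (rule imageI[OF cl])
  hence m: "g -` (A \<inter> {g u}) \<inter> space M \<in> sets M"
    by (rule measurable_sets[OF gm])
  have inj: "inj_on g (space M)" using bij by (rule bij_betw_imp_inj_on)
  have "g -` (A \<inter> {g u}) \<inter> space M = {u}"
  proof
    show "g -` (A \<inter> {g u}) \<inter> space M \<subseteq> {u}"
      using inj assms(2) by (auto dest: inj_onD)
    have "g u \<in> A" by (rule bij_betw_apply[OF bij assms(2)])
    thus "{u} \<subseteq> g -` (A \<inter> {g u}) \<inter> space M" using assms(2) by simp
  qed
  thus ?thesis using m by simp
qed

lemma sets_restrict_space_space: "sets (restrict_space M (space M)) = sets M"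
  by (auto simp: sets_restrict_space_iff dest: sets.sets_into_space[THEN subsetD])

lemma subgroupoid_in_space:
  assumes "borel_subgroupoid M r s mul iv H" shows "H \<subseteq> space M"
  using assms sets.sets_into_space unfolding borel_subgroupoid_def by blast

theorem lemma2p8:
  fixes M :: "'a measure" and U :: "'a set" and r s :: "'a \<Rightarrow> 'a"
    and mul :: "'a \<Rightarrow> 'a \<Rightarrow> 'a" and iv :: "'a \<Rightarrow> 'a"
    and Gn :: "nat \<Rightarrow> 'a set"
  assumes "analytic_space M"
    and "borel_groupoid M U r s mul iv"
    and "\<And>n. borel_subgroupoid M r s mul iv (Gn n)"
    and "\<And>n. proper_subgroupoid M U r s mul (Gn n)"
    and "incseq Gn"
    and "(\<Union>n. Gn n) = space M"
  shows "borel_amenable M U r s mul"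
proof -
  have G: "groupoid (space M) U r s mul iv" using assms(2) unfolding borel_groupoid_def by (rule conjunct1)
  have Us: "U \<in> sets M"
    using assms(2) unfolding borel_groupoid_def by (elim conjE) assumption
  have rm: "r \<in> measurable M M"
    using assms(2) unfolding borel_groupoid_def by (elim conjE) assumption
  have mulm: "(\<lambda>(g, h). mul g h) \<in> measurable (restrict_space (M \<Otimes>\<^sub>M M) (composable_pairs M r s)) M"
    using assms(2) unfolding borel_groupoid_def by (elim conjE) assumption
  have UM: "U \<subseteq> space M" using Us by (rule sets.sets_into_space)
  have G1: "\<forall>g\<in>space M. r g \<in> U \<and> s g \<in> U"
    using G unfolding groupoid_def by (elim conjE)
  have G2: "\<forall>u\<in>U. r u = u \<and> s u = u"
    using G unfolding groupoid_def by (elim conjE)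
  have G7: "\<forall>g\<in>space M. iv g \<in> space M \<and> r (iv g) = s g \<and> s (iv g) = r g \<and>
        mul g (iv g) = r g \<and> mul (iv g) g = s g"
    using G unfolding groupoid_def by (elim conjE)
  have rsU: "\<And>g. g \<in> space M \<Longrightarrow> r g \<in> U \<and> s g \<in> U" using G1 by (rule bspec)
  have ruu: "\<And>u. u \<in> U \<Longrightarrow> r u = u" using G2 by simp
  have ivp: "\<And>g. g \<in> space M \<Longrightarrow> iv g \<in> space M \<and> r (iv g) = s g \<and> s (iv g) = r g \<and>
        mul g (iv g) = r g \<and> mul (iv g) g = s g" using G7 by (rule bspec)
  have GnM: "Gn n \<subseteq> space M" for n using subgroupoid_in_space[OF assms(3)] .
  have Gnsets: "Gn n \<in> sets M" for n using assms(3)[of n] unfolding borel_subgroupoid_def by (elim conjE)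
  have "\<forall>n. \<exists>m. borel_prob_system M r (Gn n) (Gn n \<inter> U) m \<and>
        (\<forall>\<gamma>\<in>Gn n. \<forall>A \<in> sets (restrict_space M (Gn n)).
           emeasure (m (s \<gamma>)) (left_preimage r mul (Gn n) (s \<gamma>) \<gamma> A) = emeasure (m (r \<gamma>)) A)"
    using assms(4)[unfolded proper_subgroupoid_def] by (intro allI)
  then obtain mm where mm: "\<And>n. borel_prob_system M r (Gn n) (Gn n \<inter> U) (mm n)"
    and eqv: "\<And>n \<gamma> A. \<gamma>\<in>Gn n \<Longrightarrow> A \<in> sets (restrict_space M (Gn n)) \<Longrightarrow>
           emeasure (mm n (s \<gamma>)) (left_preimage r mul (Gn n) (s \<gamma>) \<gamma> A) = emeasure (mm n (r \<gamma>)) A"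
  proof -
    assume H: "\<And>mm. \<lbrakk>\<And>n. borel_prob_system M r (Gn n) (Gn n \<inter> U) (mm n);
      \<And>n \<gamma> A. \<gamma>\<in>Gn n \<Longrightarrow> A \<in> sets (restrict_space M (Gn n)) \<Longrightarrow>
           emeasure (mm n (s \<gamma>)) (left_preimage r mul (Gn n) (s \<gamma>) \<gamma> A) = emeasure (mm n (r \<gamma>)) A\<rbrakk> \<Longrightarrow> thesis"
    from choice[OF \<open>\<forall>n. _\<close>] obtain mm where
      "\<forall>n. borel_prob_system M r (Gn n) (Gn n \<inter> U) (mm n) \<and>
        (\<forall>\<gamma>\<in>Gn n. \<forall>A \<in> sets (restrict_space M (Gn n)).
           emeasure (mm n (s \<gamma>)) (left_preimage r mul (Gn n) (s \<gamma>) \<gamma> A) = emeasure (mm n (r \<gamma>)) A)"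
      by (rule exE)
    hence a: "\<And>n. borel_prob_system M r (Gn n) (Gn n \<inter> U) (mm n)"
      and b: "\<And>n \<gamma> A. \<gamma>\<in>Gn n \<Longrightarrow> A \<in> sets (restrict_space M (Gn n)) \<Longrightarrow>
           emeasure (mm n (s \<gamma>)) (left_preimage r mul (Gn n) (s \<gamma>) \<gamma> A) = emeasure (mm n (r \<gamma>)) A"
      by simp_all
    show thesis by (rule H[OF a b])
  qed
  have mmp: "prob_space (mm n u)" and mms: "sets (mm n u) = sets (restrict_space M (Gn n))"
    and mmz: "emeasure (mm n u) {h \<in> Gn n. r h \<noteq> u} = 0"
    if "u \<in> Gn n \<inter> U" for n u using mm[of n] that unfolding borel_prob_system_def by blast+
  have mmm: "\<And>f. f \<in> borel_measurable (restrict_space M (Gn n)) \<Longrightarrow>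
        (\<lambda>u. \<integral>\<^sup>+ x. f x \<partial>(mm n u)) \<in> borel_measurable (restrict_space M (Gn n \<inter> U))" for n
    using mm[of n] unfolding borel_prob_system_def by blast
  have idm: "(\<lambda>x. x) \<in> measurable (mm n u) M" if "u \<in> Gn n \<inter> U" for n u
  proof -
    have "(\<lambda>x. x) \<in> measurable (restrict_space M (Gn n)) M"
      by (rule measurable_restrict_space1) simp
    thus ?thesis unfolding measurable_cong_sets[OF mms[OF that] refl] .
  qed
  have spmm: "space (mm n u) = Gn n" if "u \<in> Gn n \<inter> U" for n u
    using sets_eq_imp_space_eq[OF mms[OF that]] GnM[of n] by (auto simp: space_restrict_space)
  define m' where "m' n u = (if u \<in> Gn n \<inter> U then distr (mm n u) M (\<lambda>x. x) else return M u)" for n u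
  have sys: "borel_prob_system M r (space M) U (m' n)" for n
    unfolding borel_prob_system_def
  proof (intro conjI ballI)
    fix u assume uU: "u \<in> U"
    show "prob_space (m' n u)"
    proof (cases "u \<in> Gn n \<inter> U")
      case True
      then show ?thesis unfolding m'_def
        using prob_space.prob_space_distr[OF mmp[OF True] idm[OF True]] by simp
    next
      case False
      then show ?thesis unfolding m'_def using uU UM by (simp add: prob_space_return subsetD)
    qed
    show "sets (m' n u) = sets (restrict_space M (space M))"
      unfolding m'_def by (simp add: sets_restrict_space_space)
    show "emeasure (m' n u) {h \<in> space M. r h \<noteq> u} = 0"
    proof (cases "{h \<in> space M. r h \<noteq> u} \<in> sets M")
      case meas: True
      show ?thesis
      proof (cases "u \<in> Gn n \<inter> U")
        case True
        have "emeasure (m' n u) {h \<in> space M. r h \<noteq> u}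
            = emeasure (mm n u) ({h \<in> space M. r h \<noteq> u} \<inter> Gn n)"
          unfolding m'_def using True meas by (simp add: emeasure_distr[OF idm[OF True]] spmm[OF True])
        also have "{h \<in> space M. r h \<noteq> u} \<inter> Gn n = {h \<in> Gn n. r h \<noteq> u}" using GnM by auto
        finally show ?thesis using mmz[OF True] by simp
      next
        case False
        have "r u = u" using ruu uU by blast
        then show ?thesis unfolding m'_def using False meas uU by (simp add: emeasure_return)
      qed
    next
      case False
      then show ?thesis unfolding m'_def by (simp add: emeasure_notin_sets)
    qed
  next
    fix f :: "'a \<Rightarrow> ennreal" assume "f \<in> borel_measurable (restrict_space M (space M))"
    hence fm: "f \<in> borel_measurable M"
      unfolding measurable_cong_sets[OF sets_restrict_space_space refl] .
    have eq: "(\<integral>\<^sup>+ x. f x \<partial>(m' n u)) = (if u \<in> Gn n then (\<integral>\<^sup>+ x. f x \<partial>(mm n u)) else f u)"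
      if "u \<in> space (restrict_space M U)" for u
    proof -
      have uU: "u \<in> U" using that UM by (auto simp: space_restrict_space)
      show ?thesis
      proof (cases "u \<in> Gn n")
        case True
        hence T: "u \<in> Gn n \<inter> U" using uU by simp
        have fd: "f \<in> borel_measurable (distr (mm n u) M (\<lambda>x. x))"
          unfolding measurable_cong_sets[OF sets_distr refl] by (rule fm)
        show ?thesis unfolding m'_def using T
          by (simp add: nn_integral_distr[OF idm[OF T] fd])
      next
        case False
        then show ?thesis unfolding m'_def using uU UM fm
          by (simp add: nn_integral_return subsetD)
      qed
    qed
    have "(\<lambda>u. if u \<in> Gn n then (\<integral>\<^sup>+ x. f x \<partial>(mm n u)) else f u) \<in> borel_measurable (restrict_space M U)"
    proof -
      have "{x \<in> space (restrict_space M U). x \<in> Gn n} = Gn n \<inter> (U \<inter> space M)"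
        by (auto simp: space_restrict_space)
      moreover have "Gn n \<inter> (U \<inter> space M) \<in> sets (restrict_space M U)"
        using Gnsets[of n] by (auto simp: sets_restrict_space)
      ultimately have Pm: "{x \<in> space (restrict_space M U). x \<in> Gn n} \<in> sets (restrict_space M U)" by simp
      have UMs: "U \<inter> space M \<in> sets M" using Us UM by (simp add: Int_absorb2)
      have "restrict_space (restrict_space M U) (Gn n) = restrict_space M (U \<inter> Gn n)"
        using Gnsets[of n] GnM[of n] UMs by (intro restrict_restrict_space) (auto simp: Int_absorb2)
      also have "U \<inter> Gn n = Gn n \<inter> U" by auto
      finally have 1: "(\<lambda>u. \<integral>\<^sup>+ x. f x \<partial>(mm n u)) \<in> borel_measurable (restrict_space (restrict_space M U) {x. x \<in> Gn n})"
        using mmm[OF measurable_restrict_space1[OF fm]] by simp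
      have 2: "f \<in> borel_measurable (restrict_space (restrict_space M U) {x. x \<notin> Gn n})"
        by (intro measurable_restrict_space1 fm)
      show ?thesis unfolding measurable_If_restrict_space_iff[OF Pm] using 1 2 by blast
    qed
    then show "(\<lambda>u. \<integral>\<^sup>+ x. f x \<partial>(m' n u)) \<in> borel_measurable (restrict_space M U)"
      by (subst measurable_cong[OF eq]) auto
  qed
  have key: "measure (m' n (s \<gamma>)) (left_preimage r mul (space M) (s \<gamma>) \<gamma> A) = measure (m' n (r \<gamma>)) A"
    if g: "\<gamma> \<in> Gn n" and A: "A \<in> sets M" for n \<gamma> A
  proof -
    have gM: "\<gamma> \<in> space M" using g GnM by auto
    have ivg: "iv \<gamma> \<in> Gn n" using assms(3)[of n] g unfolding borel_subgroupoid_def by blast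
    have clos: "\<And>x y. x \<in> Gn n \<Longrightarrow> y \<in> Gn n \<Longrightarrow> s x = r y \<Longrightarrow> mul x y \<in> Gn n"
      using assms(3)[of n] unfolding borel_subgroupoid_def by blast
    have "r \<gamma> \<in> Gn n" using clos[OF g ivg] ivp[OF gM] by simp
    moreover have "s \<gamma> \<in> Gn n" using clos[OF ivg g] ivp[OF gM] by simp
    moreover have "r \<gamma> \<in> U" "s \<gamma> \<in> U" using rsU[OF gM] by auto
    ultimately have R: "r \<gamma> \<in> Gn n \<inter> U" and S: "s \<gamma> \<in> Gn n \<inter> U" by auto
    define L where "L = left_preimage r mul (space M) (s \<gamma>) \<gamma> A"
    define Rr where "Rr = r -` {s \<gamma>} \<inter> space M"
    have Rrs: "Rr \<in> sets M" unfolding Rr_def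
      using measurable_sets[OF rm analytic_singleton[OF assms(1), of "s \<gamma>"]] S UM by auto
    define CP where "CP = composable_pairs M r s"
    have "(\<lambda>h. (\<gamma>, h)) \<in> measurable (restrict_space M Rr) (restrict_space (M \<Otimes>\<^sub>M M) CP)"
    proof (rule measurable_restrict_space3)
      show "(\<lambda>h. (\<gamma>, h)) \<in> measurable M (M \<Otimes>\<^sub>M M)" using gM by simp
      show "(\<lambda>h. (\<gamma>, h)) \<in> Rr \<rightarrow> CP" unfolding CP_def Rr_def composable_pairs_def using gM by auto
    qed
    moreover have "(\<lambda>(g, h). mul g h) \<in> measurable (restrict_space (M \<Otimes>\<^sub>M M) CP) M"
      using mulm unfolding CP_def .
    ultimately have "(\<lambda>(g, h). mul g h) \<circ> (\<lambda>h. (\<gamma>, h)) \<in> measurable (restrict_space M Rr) M"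
      by (rule measurable_comp)
    hence "(\<lambda>h. mul \<gamma> h) \<in> measurable (restrict_space M Rr) M" by (simp add: comp_def)
    hence "(\<lambda>h. mul \<gamma> h) -` A \<inter> space (restrict_space M Rr) \<in> sets (restrict_space M Rr)"
      using A by (rule measurable_sets)
    moreover have "(\<lambda>h. mul \<gamma> h) -` A \<inter> space (restrict_space M Rr) = L"
      unfolding L_def left_preimage_def Rr_def by (auto simp: space_restrict_space)
    ultimately have "L \<in> sets (restrict_space M Rr)" by simp
    hence Ls: "L \<in> sets M" using Rrs sets_restrict_space_iff[of Rr M L] by (simp add: Int_absorb2 Rr_def)
    have "measure (m' n (s \<gamma>)) L = measure (mm n (s \<gamma>)) (L \<inter> Gn n)"
      unfolding m'_def using S Ls by (simp add: measure_distr[OF idm[OF S]] spmm[OF S])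
    also have "L \<inter> Gn n = left_preimage r mul (Gn n) (s \<gamma>) \<gamma> (A \<inter> Gn n)"
      unfolding L_def left_preimage_def using clos[OF g] GnM[of n] by auto
    also have "measure (mm n (s \<gamma>)) \<dots> = measure (mm n (r \<gamma>)) (A \<inter> Gn n)"
    proof -
      have "A \<inter> Gn n \<in> sets (restrict_space M (Gn n))"
        unfolding sets_restrict_space using A by (auto intro!: image_eqI[of _ _ A])
      thus ?thesis unfolding measure_def using eqv[OF g, of "A \<inter> Gn n"] by simp
    qed
    also have "\<dots> = measure (m' n (r \<gamma>)) A"
      unfolding m'_def using R A by (simp add: measure_distr[OF idm[OF R]] spmm[OF R] Int_commute)
    finally show ?thesis unfolding L_def .
  qed
  show ?thesis
    unfolding borel_amenable_def
  proof (intro exI[of _ m'] conjI allI ballI sys)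
    fix \<gamma> assume gM: "\<gamma> \<in> space M"
    then obtain N where N: "\<gamma> \<in> Gn N" using assms(6) by blast
    have "eventually (\<lambda>n. tv_norm M
                  (\<lambda>A. measure (m' n (s \<gamma>)) (left_preimage r mul (space M) (s \<gamma>) \<gamma> A))
                  (\<lambda>A. measure (m' n (r \<gamma>)) A) = 0) sequentially"
      unfolding eventually_sequentially
    proof (intro exI[of _ N] allI impI)
      fix n assume "N \<le> n"
      hence g: "\<gamma> \<in> Gn n" using N assms(5) unfolding incseq_def by blast
      show "tv_norm M (\<lambda>A. measure (m' n (s \<gamma>)) (left_preimage r mul (space M) (s \<gamma>) \<gamma> A))
                  (\<lambda>A. measure (m' n (r \<gamma>)) A) = 0"
        unfolding tv_norm_def
      proof (rule antisym[OF SUP_least zero_le])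
        fix P assume "P \<in> {P. finite P \<and> P \<subseteq> sets M \<and> disjoint P \<and> \<Union>P = space M}"
        hence "P \<subseteq> sets M" by blast
        thus "(\<Sum>A\<in>P. ennreal \<bar>measure (m' n (s \<gamma>)) (left_preimage r mul (space M) (s \<gamma>) \<gamma> A)
                  - measure (m' n (r \<gamma>)) A\<bar>) \<le> 0"
          using key[OF g] by (simp add: subset_iff)
      qed
    qed
    thus "(\<lambda>n. tv_norm M
                  (\<lambda>A. measure (m' n (s \<gamma>)) (left_preimage r mul (space M) (s \<gamma>) \<gamma> A))
                  (\<lambda>A. measure (m' n (r \<gamma>)) A)) \<longlonglongrightarrow> 0"
      by (rule tendsto_eventually)
  qed
qed

end
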